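(* Let $l,m\geq2$ be integers with $1/l+1/m<1$, let $0<r_0<1$, and set $r_1=r_0+(1-r_0)/l$, $r_2=1-(1-r_0)/m$ (so $r_1<r_2$). Let $f_1(z)=r_0r_1^l/z^l$ on the circle $\mathbb{T}_{r_1}$ and $f_2(z)=r_0z^m/r_2^m$ on the circle $\mathbb{T}_{r_2}$, which are covering maps onto $\mathbb{T}_{r_0}$. Then there exists a continuous map $F:\overline{\mathbb{A}}_{r_1,r_2}\to\overline{\mathbb{D}}_{r_0}$ such that (1) $F|_{\mathbb{T}_{r_i}}=f_i$ for $i=1,2$; (2) $F:\mathbb{A}_{r_1,r_2}\to\mathbb{D}_{r_0}$ is quasiregular; and (3) $F(e^{2\pi i/(l+m)}z)=e^{2m\pi i/(l+m)}F(z)$ for all $z\in\overline{\mathbb{A}}_{r_1,r_2}$.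
   Context: $\mathbb{T}_r=\{z:|z|=r\}$, $\mathbb{D}_r=\{z:|z|<r\}$, $\mathbb{A}_{r_1,r_2}=\{z:r_1<|z|<r_2\}$. A map is quasiregular if it is locally a composition of a holomorphic map with quasiconformal homeomorphisms (equivalently, a continuous orientation-preserving map in $W^{1,2}_{loc}$ with bounded distortion). *)

theory Defs
  imports "HOL-Complex_Analysis.Complex_Analysis"
begin

text \<open>Metric definition of quasiconformality (Vaisala/Gehring): a sense-preserving
homeomorphism of an open planar set onto an open set whose linear dilatation
  H(z) = limsup_{r->0+} (max_{|w-z|=r} |phi w - phi z|) / (min_{|w-z|=r} |phi w - phi z|)
is bounded on the domain.\<close>

definition circ_max :: "(complex \<Rightarrow> complex) \<Rightarrow> complex \<Rightarrow> real \<Rightarrow> real" where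
  "circ_max \<phi> z r = Sup {cmod (\<phi> w - \<phi> z) | w. dist w z = r}"

definition circ_min :: "(complex \<Rightarrow> complex) \<Rightarrow> complex \<Rightarrow> real \<Rightarrow> real" where
  "circ_min \<phi> z r = Inf {cmod (\<phi> w - \<phi> z) | w. dist w z = r}"

definition linear_dilatation :: "(complex \<Rightarrow> complex) \<Rightarrow> complex \<Rightarrow> ereal" where
  "linear_dilatation \<phi> z =
     Limsup (at_right 0) (\<lambda>r. ereal (circ_max \<phi> z r / circ_min \<phi> z r))"

definition sense_preserving_on :: "(complex \<Rightarrow> complex) \<Rightarrow> complex set \<Rightarrow> bool" where
  "sense_preserving_on \<phi> V \<longleftrightarrow>
     (\<forall>z\<in>V. \<exists>e>0. \<forall>r. 0 < r \<and> r < e \<longrightarrow>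
        winding_number (\<phi> \<circ> circlepath z r) (\<phi> z) = 1)"

definition quasiconformal_on :: "(complex \<Rightarrow> complex) \<Rightarrow> complex set \<Rightarrow> bool" where
  "quasiconformal_on \<phi> V \<longleftrightarrow>
     open V \<and> open (\<phi> ` V) \<and> homeomorphism V (\<phi> ` V) \<phi> (inv_into V \<phi>) \<and>
     sense_preserving_on \<phi> V \<and>
     (\<exists>K::real. \<forall>z\<in>V. linear_dilatation \<phi> z \<le> ereal K)"

definition quasiregular_on :: "(complex \<Rightarrow> complex) \<Rightarrow> complex set \<Rightarrow> bool" where
  "quasiregular_on F U \<longleftrightarrow>
     open U \<and> continuous_on U F \<and>
     (\<forall>z\<in>U. \<exists>V W \<phi> g \<psi>. z \<in> V \<and> V \<subseteq> U \<and>
        quasiconformal_on \<phi> V \<and> g holomorphic_on (\<phi> ` V) \<and>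
        open W \<and> g ` (\<phi> ` V) \<subseteq> W \<and> quasiconformal_on \<psi> W \<and>
        (\<forall>x\<in>V. F x = \<psi> (g (\<phi> x))))"

end

theory Submission
  imports Defs
begin

lemma L0_bounds:
  fixes a b h :: complex
  shows "(cmod a - cmod b) * cmod h \<le> cmod (a*h + b*cnj h)"
    and "cmod (a*h + b*cnj h) \<le> (cmod a + cmod b) * cmod h"
proof -
  have "cmod (a*h) \<le> cmod (a*h + b*cnj h) + cmod (b * cnj h)"
    by (metis add_diff_cancel_right' norm_triangle_ineq4)
  then show "(cmod a - cmod b) * cmod h \<le> cmod (a*h + b*cnj h)"
    by (simp add: norm_mult algebra_simps)
  have "cmod (a*h + b*cnj h) \<le> cmod (a*h) + cmod (b*cnj h)" by (rule norm_triangle_ineq)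
  then show "cmod (a*h + b*cnj h) \<le> (cmod a + cmod b) * cmod h"
    by (simp add: norm_mult algebra_simps)
qed

lemma wind_lin:
  assumes a0: "a0 \<noteq> 0" and r: "r > 0"
  shows "winding_number (\<lambda>t. a0 * (circlepath z r t - z)) 0 = 1"
proof -
  have gq: "(\<lambda>t. a0 * (circlepath z r t - z)) = exp \<circ> (\<lambda>t. Ln (a0 * of_real r) + 2 * of_real pi * \<i> * of_real t)"
  proof
    fix t
    have "exp (Ln (a0 * of_real r) + 2 * of_real pi * \<i> * of_real t) = (a0 * of_real r) * exp (2 * of_real pi * \<i> * of_real t)"
      using a0 r by (simp add: exp_add)
    then show "a0 * (circlepath z r t - z) = (exp \<circ> (\<lambda>t. Ln (a0 * of_real r) + 2 * of_real pi * \<i> * of_real t)) t"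
      by (simp add: circlepath)
  qed
  have p: "path (\<lambda>t. Ln (a0 * of_real r) + 2 * of_real pi * \<i> * of_real t)"
    unfolding path_def by (intro continuous_intros)
  show ?thesis unfolding gq
    by (simp add: winding_number_compose_exp[OF p] pathfinish_def pathstart_def)
qed

lemma qc_from_estimate:
  fixes f :: "complex \<Rightarrow> complex"
  assumes S: "open S"
    and est: "\<And>w1 w2. w1 \<in> S \<Longrightarrow> w2 \<in> S \<Longrightarrow>
        cmod (f w1 - f w2 - (aa*(w1-w2) + bb*cnj(w1-w2))) \<le> ee * cmod (w1-w2)"
    and eta: "0 \<le> ee" "cmod bb + ee < cmod aa"
  shows "quasiconformal_on f S"
proof -
  define d where "d = cmod aa - cmod bb - ee"
  define M where "M = cmod aa + cmod bb + ee"
  have d: "d > 0" using eta by (simp add: d_def)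
  have M: "M > 0" using eta norm_ge_zero[of bb] unfolding M_def by linarith
  have lo: "d * cmod (w1 - w2) \<le> cmod (f w1 - f w2)" if "w1 \<in> S" "w2 \<in> S" for w1 w2
  proof -
    have "cmod (aa*(w1-w2) + bb*cnj(w1-w2)) \<le> cmod (f w1 - f w2) + cmod (f w1 - f w2 - (aa*(w1-w2) + bb*cnj(w1-w2)))"
      using norm_triangle_ineq4[of "f w1 - f w2" "f w1 - f w2 - (aa*(w1-w2) + bb*cnj(w1-w2))"] by simp
    with L0_bounds(1)[where a=aa and b=bb and h="w1-w2"] est[OF that] show ?thesis
      unfolding d_def by (simp add: left_diff_distrib)
  qed
  have hi: "cmod (f w1 - f w2) \<le> M * cmod (w1 - w2)" if "w1 \<in> S" "w2 \<in> S" for w1 w2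
  proof -
    have "cmod (f w1 - f w2) \<le> cmod (aa*(w1-w2) + bb*cnj(w1-w2)) + cmod (f w1 - f w2 - (aa*(w1-w2) + bb*cnj(w1-w2)))"
      using norm_triangle_ineq[of "aa*(w1-w2) + bb*cnj(w1-w2)" "f w1 - f w2 - (aa*(w1-w2) + bb*cnj(w1-w2))"] by simp
    with L0_bounds(2)[where a=aa and b=bb and h="w1-w2"] est[OF that] show ?thesis
      unfolding M_def by (simp add: distrib_right)
  qed
  have cont: "continuous_on S f"
    unfolding continuous_on_iff
  proof (intro ballI allI impI)
    fix x e assume x: "x \<in> S" and e: "(0::real) < e"
    show "\<exists>d>0. \<forall>x'\<in>S. dist x' x < d \<longrightarrow> dist (f x') (f x) < e"
    proof (intro exI[of _ "e/M"] conjI ballI impI)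
      show "e/M > 0" using e M by simp
      fix x' assume x': "x' \<in> S" and dx: "dist x' x < e / M"
      have "dist (f x') (f x) \<le> M * dist x' x" using hi[OF x' x] by (simp add: dist_norm)
      also have "\<dots> < e" using dx M by (simp add: pos_less_divide_eq mult.commute)
      finally show "dist (f x') (f x) < e" .
    qed
  qed
  have inj: "inj_on f S"
  proof (rule inj_onI)
    fix x y assume "x \<in> S" "y \<in> S" "f x = f y"
    with lo[of x y] d show "x = y" by (simp add: mult_le_0_iff)
  qed
  have opn: "open (f ` S)" by (rule invariance_of_domain[OF cont S inj])
  have contg: "continuous_on (f ` S) (inv_into S f)"
    unfolding continuous_on_iff
  proof (intro ballI allI impI)
    fix y e assume y: "y \<in> f ` S" and e: "(0::real) < e"
    show "\<exists>d'>0. \<forall>y'\<in>f ` S. dist y' y < d' \<longrightarrow> dist (inv_into S f y') (inv_into S f y) < e"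
    proof (intro exI[of _ "e*d"] conjI ballI impI)
      show "e*d > 0" using e d by simp
      fix y' assume y': "y' \<in> f ` S" and dy: "dist y' y < e * d"
      obtain x where x: "x \<in> S" "y = f x" using y by auto
      obtain x' where x': "x' \<in> S" "y' = f x'" using y' by auto
      have ix: "inv_into S f y = x" "inv_into S f y' = x'" using x x' inj by auto
      have "d * dist x' x \<le> dist y' y" using lo[OF x'(1) x(1)] x x' by (simp add: dist_norm)
      also have "\<dots> < e * d" by fact
      finally show "dist (inv_into S f y') (inv_into S f y) < e" using d ix
        by (simp add: mult.commute)
    qed
  qed
  have homeo: "homeomorphism S (f ` S) f (inv_into S f)"
    unfolding homeomorphism_def using cont contg inj by auto
  have sense: "sense_preserving_on f S"
    unfolding sense_preserving_on_def
  proof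
    fix z assume z: "z \<in> S"
    obtain e where e: "e > 0" "cball z e \<subseteq> S" using S z open_contains_cball by blast
    show "\<exists>e>0. \<forall>r. 0 < r \<and> r < e \<longrightarrow> winding_number (f \<circ> circlepath z r) (f z) = 1"
    proof (intro exI[of _ e] conjI allI impI)
      show "e > 0" by fact
      fix r assume r: "0 < r \<and> r < e"
      define \<gamma> where "\<gamma> = circlepath z r"
      have \<gamma>S: "\<gamma> t \<in> S" for t
      proof -
        have "dist z (\<gamma> t) = r" using r by (simp add: \<gamma>_def circlepath dist_norm norm_mult)
        then show ?thesis using e r by (auto intro: subsetD[OF e(2)])
      qed
      define g where "g = (\<lambda>t. aa * (\<gamma> t - z))"
      define h where "h = (\<lambda>t. f (\<gamma> t) - f z)"
      have aa: "aa \<noteq> 0" using eta norm_ge_zero[of bb] by (metis add_nonneg_nonneg norm_zero not_less)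
      have wg: "winding_number g 0 = 1" unfolding g_def \<gamma>_def using wind_lin[OF aa] r by simp
      have pg: "path g" unfolding g_def \<gamma>_def circlepath path_def by (intro continuous_intros)
      have cg: "continuous_on {0..1} \<gamma>" unfolding \<gamma>_def circlepath by (intro continuous_intros)
      have "continuous_on {0..1} (f \<circ> \<gamma>)"
        by (rule continuous_on_compose[OF cg continuous_on_subset[OF cont]]) (use \<gamma>S in auto)
      then have ph: "path h" unfolding h_def path_def by (auto simp: o_def intro!: continuous_intros)
      have "winding_number h 0 = winding_number g 0"
      proof (rule winding_number_nearby_loops_eq[OF pg ph])
        have c10: "circlepath z r 1 = circlepath z r 0"
          using pathfinish_circlepath[of z r] pathstart_circlepath[of z r] unfolding pathfinish_def pathstart_def by simp
        show "pathfinish g = pathstart g" "pathfinish h = pathstart h"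
          by (simp_all add: g_def h_def \<gamma>_def pathfinish_def pathstart_def c10)
        fix t :: real assume "t \<in> {0..1}"
        have n: "cmod (\<gamma> t - z) = r" using r by (simp add: \<gamma>_def circlepath norm_mult)
        have n2: "cmod (cnj (\<gamma> t) - cnj z) = r" using n by (metis complex_cnj_diff complex_mod_cnj)
        have "cmod (h t - g t) \<le> cmod (f (\<gamma> t) - f z - (aa*(\<gamma> t - z) + bb*cnj(\<gamma> t - z))) + cmod (bb*cnj(\<gamma> t - z))"
          unfolding h_def g_def using norm_triangle_ineq[of "f (\<gamma> t) - f z - (aa*(\<gamma> t - z) + bb*cnj(\<gamma> t - z))" "bb*cnj(\<gamma> t - z)"]
          by (simp add: algebra_simps)
        also have "\<dots> \<le> ee * r + cmod bb * r"
          using est[OF \<gamma>S[of t] z] n n2 by (simp add: norm_mult)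
        also have "\<dots> < cmod aa * r" using eta r by (simp add: distrib_right[symmetric])
        also have "\<dots> = cmod (g t - 0)" by (simp add: g_def norm_mult n)
        finally show "cmod (h t - g t) < cmod (g t - 0)" .
      qed
      then show "winding_number (f \<circ> circlepath z r) (f z) = 1"
        using wg by (subst winding_number_offset) (simp add: h_def \<gamma>_def o_def)
    qed
  qed
  have dil: "linear_dilatation f z \<le> ereal (M/d)" if z: "z \<in> S" for z
  proof -
    obtain e where e: "e > 0" "cball z e \<subseteq> S" using S z open_contains_cball by blast
    have "eventually (\<lambda>r. ereal (circ_max f z r / circ_min f z r) \<le> ereal (M/d)) (at_right 0)"
    proof (rule eventually_mono[OF eventually_at_right_real[OF e(1)]])
      fix r :: real assume "r \<in> {0<..<e}"
      then have r: "0 < r" "r < e" by auto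
      let ?A = "{cmod (f w - f z) | w. dist w z = r}"
      have ne: "?A \<noteq> {}" using r by (auto intro!: exI[of _ "z + of_real r"] simp: dist_norm)
      have wS: "w \<in> S" if "dist w z = r" for w using that e r by (auto simp: dist_commute intro: subsetD[OF e(2)])
      have ub: "x \<le> M * r" if xA: "x \<in> ?A" for x
      proof -
        obtain w where w: "dist w z = r" "x = cmod (f w - f z)" using xA by blast
        show ?thesis using hi[OF wS[OF w(1)] z] w by (simp add: dist_norm)
      qed
      have lb: "d * r \<le> x" if xA: "x \<in> ?A" for x
      proof -
        obtain w where w: "dist w z = r" "x = cmod (f w - f z)" using xA by blast
        show ?thesis using lo[OF wS[OF w(1)] z] w by (simp add: dist_norm)
      qed
      have mx: "circ_max f z r \<le> M * r" unfolding circ_max_def by (rule cSup_least[OF ne ub]) 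
      have mn: "d * r \<le> circ_min f z r" unfolding circ_min_def by (rule cInf_greatest[OF ne lb])
      have mx0: "0 \<le> circ_max f z r"
      proof -
        obtain x where "x \<in> ?A" using ne by blast
        moreover have "bdd_above ?A" by (rule bdd_aboveI[where M="M*r"]) (rule ub)
        ultimately have "x \<le> circ_max f z r" unfolding circ_max_def by (rule cSup_upper)
        moreover have "0 \<le> x" using \<open>x \<in> ?A\<close> by auto
        ultimately show ?thesis by simp
      qed
      have dr: "0 < d * r" using d r by simp
      have "circ_max f z r / circ_min f z r \<le> (M*r) / (d*r)"
        by (rule frac_le[OF _ mx dr mn]) (use M r in simp)
      also have "\<dots> = M / d" using r by simp
      finally show "ereal (circ_max f z r / circ_min f z r) \<le> ereal (M/d)" by simp
    qed
    then show ?thesis unfolding linear_dilatation_def by (rule Limsup_bounded)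
  qed
  show ?thesis unfolding quasiconformal_on_def
    using S opn homeo sense dil by blast
qed

lemma qc_id: "open S \<Longrightarrow> quasiconformal_on (\<lambda>x. x) S"
  by (rule qc_from_estimate[where aa=1 and bb=0 and ee=0]) auto

lemma qc_local:
  fixes f :: "complex \<Rightarrow> complex"
  assumes U: "open U" and z0: "z0 \<in> U"
    and der: "\<And>w. w \<in> U \<Longrightarrow> (f has_derivative (\<lambda>h. A w * h + B w * cnj h)) (at w)"
    and cA: "continuous_on U A" and cB: "continuous_on U B"
    and lt: "cmod (B z0) < cmod (A z0)"
  shows "\<exists>V. open V \<and> z0 \<in> V \<and> V \<subseteq> U \<and> quasiconformal_on f V"
proof -
  define a0 where "a0 = A z0"
  define b0 where "b0 = B z0"
  define \<eta> where "\<eta> = (cmod a0 - cmod b0) / 2"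
  have eta: "\<eta> > 0" using lt by (simp add: \<eta>_def a0_def b0_def)
  have iA: "isCont A z0" using cA U z0 continuous_on_eq_continuous_at by blast
  have iB: "isCont B z0" using cB U z0 continuous_on_eq_continuous_at by blast
  obtain e1 where e1: "e1 > 0" "\<And>w. dist w z0 < e1 \<Longrightarrow> dist (A w) a0 < \<eta>/2"
    using iA eta unfolding continuous_at_eps_delta a0_def by (metis half_gt_zero)
  obtain e2 where e2: "e2 > 0" "\<And>w. dist w z0 < e2 \<Longrightarrow> dist (B w) b0 < \<eta>/2"
    using iB eta unfolding continuous_at_eps_delta b0_def by (metis half_gt_zero)
  obtain e3 where e3: "e3 > 0" "ball z0 e3 \<subseteq> U" using U z0 open_contains_ball by blast
  define e where "e = min e1 (min e2 e3)"
  have e: "e > 0" using e1 e2 e3 by (simp add: e_def)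
  define V where "V = ball z0 e"
  have VU: "V \<subseteq> U" using e3 by (auto simp: V_def e_def)
  define g where "g = (\<lambda>w. f w - (a0 * w + b0 * cnj w))"
  have dg: "(g has_derivative (\<lambda>h. (A w - a0) * h + (B w - b0) * cnj h)) (at w within V)" if "w \<in> V" for w
  proof -
    have "(g has_derivative (\<lambda>h. (A w * h + B w * cnj h) - (a0 * h + b0 * cnj h))) (at w)"
      unfolding g_def
      by (intro derivative_intros der) (use that VU in auto)
    then show ?thesis
      by (auto intro: has_derivative_at_withinI simp: algebra_simps)
  qed
  have on: "onorm (\<lambda>h. (A w - a0) * h + (B w - b0) * cnj h) \<le> \<eta>" if "w \<in> V" for w
  proof (rule onorm_le)
    fix h
    have d1: "cmod (A w - a0) \<le> \<eta>/2" using e1(2)[of w] that by (auto simp: V_def e_def dist_commute dist_norm norm_minus_commute)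
    have d2: "cmod (B w - b0) \<le> \<eta>/2" using e2(2)[of w] that by (auto simp: V_def e_def dist_commute dist_norm norm_minus_commute)
    have "cmod ((A w - a0) * h + (B w - b0) * cnj h) \<le> (cmod (A w - a0) + cmod (B w - b0)) * cmod h"
      by (rule L0_bounds(2))
    also have "\<dots> \<le> \<eta> * cmod h"
      using d1 d2 by (intro mult_right_mono) auto
    finally show "norm ((A w - a0) * h + (B w - b0) * cnj h) \<le> \<eta> * norm h" by simp
  qed
  have est: "cmod (f w1 - f w2 - (a0*(w1-w2) + b0*cnj(w1-w2))) \<le> \<eta> * cmod (w1-w2)"
    if "w1 \<in> V" "w2 \<in> V" for w1 w2
  proof -
    have "norm (g w1 - g w2) \<le> \<eta> * norm (w1 - w2)"
      by (rule differentiable_bound[OF _ dg on that]) (simp add: V_def)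
    then show ?thesis by (simp add: g_def algebra_simps)
  qed
  have oV: "open V" by (simp add: V_def)
  have lt2: "cmod b0 + \<eta> < cmod a0" using lt by (simp add: \<eta>_def a0_def b0_def field_simps)
  have "quasiconformal_on f V"
    by (rule qc_from_estimate[OF oV est]) (use eta lt2 in auto)
  then show ?thesis using VU e by (auto simp: V_def intro!: exI[of _ V])
qed

lemma wd_cmod:
  fixes z :: complex
  assumes z: "z \<noteq> 0"
  shows "((\<lambda>w. complex_of_real (cmod w)) has_derivative
     (\<lambda>h. (cnj z / (2 * of_real (cmod z))) * h + (z / (2 * of_real (cmod z))) * cnj h)) (at z)"
proof -
  have "((\<lambda>w. complex_of_real (cmod w)) has_derivative (\<lambda>h. of_real (h \<bullet> sgn z))) (at z)"
    using has_derivative_norm[OF z] by (intro derivative_eq_intros) auto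
  moreover have "(\<lambda>h. of_real (h \<bullet> sgn z)) = (\<lambda>h. (cnj z / (2 * of_real (cmod z))) * h + (z / (2 * of_real (cmod z))) * cnj h)"
  proof
    fix h
    have c: "cmod z \<noteq> 0" using z by simp
    show "of_real (h \<bullet> sgn z) = (cnj z / (2 * of_real (cmod z))) * h + (z / (2 * of_real (cmod z))) * cnj h"
      using c by (simp add: complex_eq_iff inner_complex_def sgn_div_norm field_simps)
  qed
  ultimately show ?thesis by simp
qed

lemma wd_realfun:
  fixes z :: complex
  assumes z: "z \<noteq> 0" and P: "(P has_real_derivative P') (at (cmod z))"
  shows "((\<lambda>w. complex_of_real (P (cmod w))) has_derivative
     (\<lambda>h. (of_real P' * cnj z / (2 * of_real (cmod z))) * h + (of_real P' * z / (2 * of_real (cmod z))) * cnj h)) (at z)"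
proof -
  have n: "(cmod has_derivative (\<lambda>h. h \<bullet> sgn z)) (at z)" using has_derivative_norm[OF z] by simp
  have "((\<lambda>w. P (cmod w)) has_derivative (\<lambda>h. P' * (h \<bullet> sgn z))) (at z)"
    using has_derivative_compose[OF n P[unfolded has_field_derivative_def]] by (simp add: mult.commute)
  then have "((\<lambda>w. complex_of_real (P (cmod w))) has_derivative (\<lambda>h. of_real (P' * (h \<bullet> sgn z)))) (at z)"
    by (intro derivative_eq_intros) auto
  moreover have "(\<lambda>h. of_real (P' * (h \<bullet> sgn z))) = (\<lambda>h. (of_real P' * cnj z / (2 * of_real (cmod z))) * h + (of_real P' * z / (2 * of_real (cmod z))) * cnj h)"
  proof
    fix h
    have c: "cmod z \<noteq> 0" using z by simp
    show "complex_of_real (P' * (h \<bullet> sgn z)) = (of_real P' * cnj z / (2 * of_real (cmod z))) * h + (of_real P' * z / (2 * of_real (cmod z))) * cnj h"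
      using c by (simp add: complex_eq_iff inner_complex_def sgn_div_norm field_simps)
  qed
  ultimately show ?thesis by simp
qed

lemma wd_U:
  fixes z :: complex
  assumes z: "z \<noteq> 0"
  shows "((\<lambda>w. w / complex_of_real (cmod w)) has_derivative
     (\<lambda>h. (1 / (2 * of_real (cmod z))) * h - ((z / of_real (cmod z))^2 / (2 * of_real (cmod z))) * cnj h)) (at z)"
proof -
  have c: "complex_of_real (cmod z) \<noteq> 0" using z by simp
  have "((\<lambda>w. w / complex_of_real (cmod w)) has_derivative
     (\<lambda>h. (h * of_real (cmod z) - z * ((cnj z / (2 * of_real (cmod z))) * h + (z / (2 * of_real (cmod z))) * cnj h)) / (of_real (cmod z))^2)) (at z)"
    using has_derivative_divide'[OF has_derivative_ident wd_cmod[OF z] c]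
    by (simp add: power2_eq_square)
  moreover have "(\<lambda>h. (h * of_real (cmod z) - z * ((cnj z / (2 * of_real (cmod z))) * h + (z / (2 * of_real (cmod z))) * cnj h)) / (of_real (cmod z))^2)
     = (\<lambda>h. (1 / (2 * of_real (cmod z))) * h - ((z / of_real (cmod z))^2 / (2 * of_real (cmod z))) * cnj h)"
  proof
    fix h
    have zz: "z * cnj z = (of_real (cmod z))^2" using complex_norm_square[of z] by simp
    show "(h * of_real (cmod z) - z * ((cnj z / (2 * of_real (cmod z))) * h + (z / (2 * of_real (cmod z))) * cnj h)) / (of_real (cmod z))^2
       = (1 / (2 * of_real (cmod z))) * h - ((z / of_real (cmod z))^2 / (2 * of_real (cmod z))) * cnj h"
      using c zz by (simp add: field_simps power2_eq_square)
  qed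
  ultimately show ?thesis by simp
qed

lemma alg_poly:
  fixes u cu k hf h ch p p' q q' w v M L :: complex
  assumes "u * cu = 1" "2 * hf = 1"
  shows "p*(M*(k*h - u^2*k*ch)*w) + (p'*cu*hf*h + p'*u*hf*ch)*(u*w) + q*(L*(k*ch - cu^2*k*h)* v) + (q'*cu*hf*h + q'*u*hf*ch)*(cu* v)
   = cu*hf*((u*w)*(p' + M*p*2*k) + (cu* v)*(q' - L*q*2*k))*h + u*hf*((u*w)*(p' - M*p*2*k) + (cu* v)*(q' + L*q*2*k))*ch"
  using assms by algebra

lemma alg3:
  fixes u v R k hf h ch p pp q qq w y M L :: complex
  assumes "u * v = 1" "R * k = hf" "2 * hf = 1"
  shows "p * (M * (1 * k * h - u\<^sup>2 * k * ch) * w) +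
     (pp * (R * v) * k * h + pp * (R * u) * k * ch) * (u * w) +
     (q * (L * (1 * k * ch - v\<^sup>2 * k * h) * y) +
      (qq * (R * v) * k * h + qq * (R * u) * k * ch) * (v * y)) =
     v * hf * (u * w * (pp + 2 * (M * p) * k) + v * y * (qq - 2 * (L * q) * k)) * h +
     u * hf * (u * w * (pp - 2 * (M * p) * k) + v * y * (qq + 2 * (L * q) * k)) * ch"
  using assms by algebra

lemma alg2:
  fixes u R h ch p pp q qq :: complex
  assumes u0: "u \<noteq> 0" and R0: "R \<noteq> 0"
  shows "p * (complex_of_nat (Suc m1) * (1 / (2 * R) * h - u\<^sup>2 / (2 * R) * ch) * u ^ (Suc m1 - 1)) +
     (pp * (R * (1 / u)) / (2 * R) * h + pp * (R * u) / (2 * R) * ch) * u ^ Suc m1 +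
     (q * (complex_of_nat (Suc l1) * (1 / (2 * R) * ch - (1 / u)\<^sup>2 / (2 * R) * h) * (1 / u) ^ (Suc l1 - 1)) +
      (qq * (R * (1 / u)) / (2 * R) * h + qq * (R * u) / (2 * R) * ch) * (1 / u) ^ Suc l1) =
     1 / u / 2 * (u ^ Suc m1 * (pp + complex_of_nat (Suc m1) * p / R) + (1 / u) ^ Suc l1 * (qq - complex_of_nat (Suc l1) * q / R)) * h +
     u / 2 * (u ^ Suc m1 * (pp - complex_of_nat (Suc m1) * p / R) + (1 / u) ^ Suc l1 * (qq + complex_of_nat (Suc l1) * q / R)) * ch"
proof -
  define v where "v = 1 / u"
  have uv: "u * v = 1" using u0 by (simp add: v_def)
  have e: "1 / u = v" by (simp add: v_def)
  define k where "k = 1 / (2 * R)"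
  have kR: "2 * R * k = 1" using R0 by (simp add: k_def)
  have a: "X / (2 * R) = X * k" for X by (simp add: k_def)
  have b: "X / R = 2 * X * k" for X using R0 by (simp add: k_def)
  define hf :: complex where "hf = 1 / 2"
  have c: "X / 2 = X * hf" for X :: complex by (simp add: hf_def)
  have hf2: "2 * hf = 1" by (simp add: hf_def)
  have Rk: "R * k = hf" using R0 by (simp add: hf_def k_def)
  show ?thesis unfolding e a b c
    unfolding diff_Suc_1 power_Suc by (rule alg3[OF uv Rk hf2])
qed

definition Fgen :: "(real \<Rightarrow> real) \<Rightarrow> (real \<Rightarrow> real) \<Rightarrow> nat \<Rightarrow> nat \<Rightarrow> complex \<Rightarrow> complex" where
  "Fgen P Q m l w = of_real (P (cmod w)) * (w / of_real (cmod w))^m + of_real (Q (cmod w)) * (cnj (w / of_real (cmod w)))^l"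

lemma F_deriv:
  fixes z :: complex
  assumes z: "z \<noteq> 0" and P: "(P has_real_derivative P') (at (cmod z))"
    and Q: "(Q has_real_derivative Q') (at (cmod z))"
  shows "(Fgen P Q (Suc m1) (Suc l1) has_derivative (\<lambda>h.
      (let \<rho> = cmod z; u = z / of_real \<rho> in
       cnj u / 2 * (u^(Suc m1) * of_real (P' + real (Suc m1) * P \<rho> / \<rho>) + cnj u ^ (Suc l1) * of_real (Q' - real (Suc l1) * Q \<rho> / \<rho>))) * h
    + (let \<rho> = cmod z; u = z / of_real \<rho> in
       u / 2 * (u^(Suc m1) * of_real (P' - real (Suc m1) * P \<rho> / \<rho>) + cnj u ^ (Suc l1) * of_real (Q' + real (Suc l1) * Q \<rho> / \<rho>))) * cnj h)) (at z)"
proof -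
  define R where "R = complex_of_real (cmod z)"
  define u where "u = z / R"
  have R0: "R \<noteq> 0" using z by (simp add: R_def)
  have zR: "z = R * u" using R0 by (simp add: u_def)
  have czR: "cnj z = R * cnj u" using R0 by (simp add: u_def R_def)
  have zz: "z * cnj z = R * R" using complex_norm_square[of z] by (simp add: R_def power2_eq_square)
  have cR: "cnj R = R" by (simp add: R_def)
  have cu: "cnj u = cnj z / R" by (simp add: u_def cR)
  have ucu: "u * cnj u = 1" using zz R0 by (simp add: cu u_def cR)
  have dU: "((\<lambda>w. w / complex_of_real (cmod w)) has_derivative (\<lambda>h. (1 / (2 * R)) * h - (u^2 / (2 * R)) * cnj h)) (at z)"
    using wd_U[OF z] by (simp add: R_def u_def)
  have dcU: "((\<lambda>w. cnj (w / complex_of_real (cmod w))) has_derivative (\<lambda>h. (1 / (2 * R)) * cnj h - (cnj u^2 / (2 * R)) * h)) (at z)"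
    using has_derivative_cnj[OF dU] by (simp add: cR)
  have dP: "((\<lambda>w. complex_of_real (P (cmod w))) has_derivative (\<lambda>h. (of_real P' * cnj z / (2 * R)) * h + (of_real P' * z / (2 * R)) * cnj h)) (at z)"
    using wd_realfun[OF z P] by (simp add: R_def)
  have dQ: "((\<lambda>w. complex_of_real (Q (cmod w))) has_derivative (\<lambda>h. (of_real Q' * cnj z / (2 * R)) * h + (of_real Q' * z / (2 * R)) * cnj h)) (at z)"
    using wd_realfun[OF z Q] by (simp add: R_def)
  have dU': "((\<lambda>w. w / complex_of_real (cmod w)) has_derivative (\<lambda>h. (1 / (2 * R)) * h - (u^2 / (2 * R)) * cnj h)) (at z)" by (rule dU)
  note D0 = has_derivative_add[OF has_derivative_mult[OF dP has_derivative_power[OF dU, of "Suc m1"]]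
                                has_derivative_mult[OF dQ has_derivative_power[OF dcU, of "Suc l1"]]]
  have ff: "(\<lambda>x. complex_of_real (P (cmod x)) * (x / complex_of_real (cmod x)) ^ Suc m1 +
          complex_of_real (Q (cmod x)) * cnj (x / complex_of_real (cmod x)) ^ Suc l1) = Fgen P Q (Suc m1) (Suc l1)"
    by (simp add: Fgen_def fun_eq_iff)
  have gx: "z / complex_of_real (cmod z) = u" by (simp add: u_def R_def)
  show ?thesis
    apply (rule has_derivative_eq_rhs[OF D0[unfolded ff gx]])
    apply (rule ext)
    subgoal for h
  proof -
    define p where "p = complex_of_real (P (cmod z))"
    define q where "q = complex_of_real (Q (cmod z))"
    define pp where "pp = complex_of_real P'"
    define qq where "qq = complex_of_real Q'"
    have t1: "complex_of_real (P' + real (Suc m1) * P (cmod z) / cmod z) = pp + of_nat (Suc m1) * p / R"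
      by (simp add: R_def p_def pp_def)
    have t2: "complex_of_real (P' - real (Suc m1) * P (cmod z) / cmod z) = pp - of_nat (Suc m1) * p / R"
      by (simp add: R_def p_def pp_def)
    have t3: "complex_of_real (Q' - real (Suc l1) * Q (cmod z) / cmod z) = qq - of_nat (Suc l1) * q / R"
      by (simp add: R_def q_def qq_def)
    have t4: "complex_of_real (Q' + real (Suc l1) * Q (cmod z) / cmod z) = qq + of_nat (Suc l1) * q / R"
      by (simp add: R_def q_def qq_def)
    have u0: "u \<noteq> 0" using ucu by auto
    have cu1: "cnj u = 1 / u" using ucu u0 by (simp add: field_simps)
    show ?thesis
      unfolding Let_def gx t1 t2 t3 t4 p_def[symmetric] q_def[symmetric] pp_def[symmetric] qq_def[symmetric]
      unfolding czR
      unfolding zR cu1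
      by (rule alg2[OF u0 R0])
  qed
  done
qed

lemma core_ineq:
  fixes X1 X2 Y1 Y2 :: real and e1 e2 :: complex
  assumes e1: "cmod e1 = 1" and e2: "cmod e2 = 1"
    and H: "X1^2 + X2^2 - Y1^2 - Y2^2 > 2 * \<bar>X1*X2 - Y1*Y2\<bar>"
  shows "cmod (e1 * of_real Y1 + e2 * of_real Y2) < cmod (e1 * of_real X1 + e2 * of_real X2)"
proof -
  define w where "w = e1 * cnj e2"
  have e2c: "e2 * cnj e2 = 1" using complex_norm_square[of e2] e2 by simp
  have ew: "e1 = w * e2"
  proof -
    have "w * e2 = e1 * (e2 * cnj e2)" by (simp add: w_def mult_ac)
    then show ?thesis using e2c by simp
  qed
  have wn: "cmod w = 1" using e1 e2 by (simp add: w_def norm_mult)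
  have wre: "(Re w)^2 + (Im w)^2 = 1" using wn by (metis cmod_power2 power_one)
  have sq: "(cmod (e1 * of_real Z1 + e2 * of_real Z2))^2 = Z1^2 + Z2^2 + 2*Z1*Z2*Re w" for Z1 Z2 :: real
  proof -
    have "e1 * of_real Z1 + e2 * of_real Z2 = e2 * (w * of_real Z1 + of_real Z2)"
      by (simp add: ew algebra_simps)
    then have "cmod (e1 * of_real Z1 + e2 * of_real Z2) = cmod (w * of_real Z1 + of_real Z2)"
      using e2 by (simp add: norm_mult)
    then have "(cmod (e1 * of_real Z1 + e2 * of_real Z2))^2 = (Re w * Z1 + Z2)^2 + (Im w * Z1)^2"
      by (simp add: cmod_power2)
    also have "\<dots> = Z1^2 * ((Re w)^2 + (Im w)^2) + Z2^2 + 2*Z1*Z2*Re w"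
      by (simp add: power2_eq_square algebra_simps)
    finally show ?thesis using wre by simp
  qed
  have c: "\<bar>Re w\<bar> \<le> 1" using wn abs_Re_le_cmod by metis
  have "2 * (X1*X2 - Y1*Y2) * Re w \<ge> - (2 * \<bar>X1*X2 - Y1*Y2\<bar>)"
  proof -
    define a where "a = X1*X2 - Y1*Y2"
    have "\<bar>a * Re w\<bar> \<le> \<bar>a\<bar>"
      using c by (simp add: abs_mult mult_left_le)
    then have "- \<bar>a\<bar> \<le> a * Re w" by arith
    then show ?thesis unfolding a_def[symmetric] by simp
  qed
  then have "(cmod (e1 * of_real Y1 + e2 * of_real Y2))^2 < (cmod (e1 * of_real X1 + e2 * of_real X2))^2"
    unfolding sq using H by (simp add: algebra_simps)
  then show ?thesis by (rule power_less_imp_less_base) simp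
qed

lemma J_ineq:
  fixes \<rho> P Q P' Q' :: real and u :: complex and m l :: nat
  assumes r: "\<rho> > 0" and u: "cmod u = 1" and P: "P \<ge> 0" and Q: "Q \<ge> 0" and P': "P' \<ge> 0" and Q': "Q' \<le> 0"
    and H: "(real m * P - real l * Q) * (P' + Q') > 0"
  shows "cmod (u / 2 * (u^m * of_real (P' - real m * P / \<rho>) + cnj u ^ l * of_real (Q' + real l * Q / \<rho>)))
       < cmod (cnj u / 2 * (u^m * of_real (P' + real m * P / \<rho>) + cnj u ^ l * of_real (Q' - real l * Q / \<rho>)))"
proof -
  have n1: "cmod (u^m) = 1" using u by (simp add: norm_power)
  have n2: "cmod (cnj u ^ l) = 1" using u by (simp add: norm_power)
  define X1 where "X1 = P' + real m * P / \<rho>"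
  define X2 where "X2 = Q' - real l * Q / \<rho>"
  define Y1 where "Y1 = P' - real m * P / \<rho>"
  define Y2 where "Y2 = Q' + real l * Q / \<rho>"
  have a: "X1^2 + X2^2 - Y1^2 - Y2^2 = 4 * (real m * P * P' - real l * Q * Q') / \<rho>"
    unfolding X1_def X2_def Y1_def Y2_def using r by (simp add: power2_eq_square field_simps)
  have b: "X1*X2 - Y1*Y2 = 2 * (real m * P * Q' - real l * P' * Q) / \<rho>"
    unfolding X1_def X2_def Y1_def Y2_def using r by (simp add: field_simps)
  have s1: "real m * P * Q' \<le> 0" using P Q' by (simp add: mult_nonneg_nonpos)
  have s2: "real l * P' * Q \<ge> 0" using P' Q by simp
  have b0: "2 * (real m * P * Q' - real l * P' * Q) / \<rho> \<le> 0"
    using s1 s2 r by (simp add: divide_nonpos_pos)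
  have b2: "\<bar>X1*X2 - Y1*Y2\<bar> = 2 * (real l * P' * Q - real m * P * Q') / \<rho>"
    unfolding b abs_of_nonpos[OF b0] using r by (simp add: field_simps)
  have key: "(real m * P * P' - real l * Q * Q') - (real l * P' * Q - real m * P * Q') = (real m * P - real l * Q) * (P' + Q')"
    by (simp add: algebra_simps)
  have "X1^2 + X2^2 - Y1^2 - Y2^2 > 2 * \<bar>X1*X2 - Y1*Y2\<bar>"
  proof -
    have pos: "0 < 4 * ((real m * P - real l * Q) * (P' + Q')) / \<rho>" using H r by simp
    have "X1^2 + X2^2 - Y1^2 - Y2^2 - 2 * \<bar>X1*X2 - Y1*Y2\<bar> = 4 * ((real m * P - real l * Q) * (P' + Q')) / \<rho>"
      unfolding a b2 key[symmetric] by (simp add: diff_divide_distrib)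
    then show ?thesis using pos by linarith
  qed
  from core_ineq[OF n1 n2 this] have "cmod (u^m * of_real Y1 + cnj u ^ l * of_real Y2) < cmod (u^m * of_real X1 + cnj u ^ l * of_real X2)" .
  then show ?thesis using u by (simp add: norm_mult X1_def[symmetric] X2_def[symmetric] Y1_def[symmetric] Y2_def[symmetric])
qed

lemma sq0_deriv: "((\<lambda>x::real. (max 0 x)^2) has_real_derivative (2 * max 0 x)) (at x)"
proof (cases "x = 0")
  case True
  have ev: "eventually (\<lambda>y. max 0 y = ((max 0 y)^2 - (max 0 0)^2) / (y - 0)) (at (0::real))"
    unfolding eventually_at by (intro exI[of _ 1]) (auto simp: max_def power2_eq_square)
  have "((\<lambda>y::real. max 0 y) \<longlongrightarrow> max 0 0) (at 0)"
    by (intro tendsto_intros)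
  then have "((\<lambda>y. ((max 0 y)^2 - (max 0 0)^2) / (y - 0)) \<longlongrightarrow> 2 * max 0 (0::real)) (at 0)"
    using tendsto_cong[OF ev] by simp
  then show ?thesis using True by (simp add: has_field_derivative_iff)
next
  case False
  show ?thesis
  proof (cases "x > 0")
    case True
    have "((\<lambda>x::real. x^2) has_real_derivative (2 * x)) (at x)"
      by (rule derivative_eq_intros refl | simp)+
    then have "((\<lambda>x::real. (max 0 x)^2) has_real_derivative (2 * x)) (at x)"
      by (rule has_field_derivative_transform_within_open[where S="{0<..}"]) (use True in auto)
    then show ?thesis using True by simp
  next
    case F2: False
    with False have neg: "x < 0" by simp
    have "((\<lambda>x::real. 0) has_real_derivative 0) (at x)" by simp
    then have "((\<lambda>x::real. (max 0 x)^2) has_real_derivative 0) (at x)"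
      by (rule has_field_derivative_transform_within_open[where S="{..<0}"]) (use neg in auto)
    then show ?thesis using neg by simp
  qed
qed

definition sq0 :: "real \<Rightarrow> real" where "sq0 x = (max 0 x)^2"

lemma sq0_deriv': "(sq0 has_real_derivative (2 * max 0 x)) (at x)"
  unfolding sq0_def[abs_def] by (rule sq0_deriv)

locale constr =
  fixes l m :: nat and r0 r1 r2 :: real
  assumes l2: "l \<ge> 2" and m2: "m \<ge> 2" and r0: "0 < r0" and r1: "0 < r1" and r12: "r1 < r2"
begin

definition "N = l + m"
definition "rc = (r1 + r2) / 2"
definition "ra = (r1 + rc) / 2"
definition "rb = (rc + r2) / 2"
definition "kap = real m * rc ^ N / real l"
definition "Phi1 x = x ^ m + kap / x ^ l"
definition "alp = r0 / max (Phi1 r1) (Phi1 r2)"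
definition "bet = alp * kap"
definition "Phi x = alp * x ^ m + bet / x ^ l"
definition "ca = alp * r1 ^ m / (ra - r1)^2"
definition "cb = (r0 - bet / r1 ^ l) / (ra - r1)^2"
definition "cA = (r0 - alp * r2 ^ m) / (r2 - rb)^2"
definition "cB = (bet / r2 ^ l) / (r2 - rb)^2"
definition "Pf x = alp * x ^ m - ca * sq0 (ra - x) + cA * sq0 (x - rb)"
definition "Qf x = bet / x ^ l + cb * sq0 (ra - x) - cB * sq0 (x - rb)"
definition "Pd x = real m * alp * x ^ (m - 1) + 2 * ca * max 0 (ra - x) + 2 * cA * max 0 (x - rb)"
definition "Qd x = - (real l * bet / x ^ (l + 1)) - 2 * cb * max 0 (ra - x) - 2 * cB * max 0 (x - rb)"

lemma order: "r1 < ra" "ra < rc" "rc < rb" "rb < r2" "0 < ra" "0 < rc" "0 < rb"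
  using r1 r12 by (auto simp: ra_def rb_def rc_def field_simps)

lemma pos: "0 < kap" "0 < alp" "0 < bet"
proof -
  show k: "0 < kap" using order l2 m2 by (simp add: kap_def)
  have "0 < Phi1 r1" using r1 k unfolding Phi1_def by (intro add_pos_pos) auto
  then have "0 < max (Phi1 r1) (Phi1 r2)" by simp
  then show a: "0 < alp" using r0 by (simp add: alp_def)
  show "0 < bet" using a k by (simp add: bet_def)
qed

lemma Phi_le: "Phi r1 \<le> r0" "Phi r2 \<le> r0"
proof -
  have "0 < Phi1 r1" using r1 pos unfolding Phi1_def by (intro add_pos_pos) auto
  then have M: "0 < max (Phi1 r1) (Phi1 r2)" by simp
  have e: "Phi x = alp * Phi1 x" for x by (simp add: Phi_def Phi1_def bet_def algebra_simps)
  have "alp * Phi1 r1 \<le> alp * max (Phi1 r1) (Phi1 r2)" using pos by (intro mult_left_mono) auto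
  also have "\<dots> = r0" using M by (simp add: alp_def)
  finally show "Phi r1 \<le> r0" by (simp add: e)
  have "alp * Phi1 r2 \<le> alp * max (Phi1 r1) (Phi1 r2)" using pos by (intro mult_left_mono) auto
  also have "\<dots> = r0" using M by (simp add: alp_def)
  finally show "Phi r2 \<le> r0" by (simp add: e)
qed

lemma coefs: "0 \<le> ca" "ca \<le> cb" "0 \<le> cB" "cB \<le> cA"
proof -
  have d1: "0 < (ra - r1)^2" using order by simp
  have d2: "0 < (r2 - rb)^2" using order by simp
  show "0 \<le> ca" using pos r1 d1 by (simp add: ca_def)
  have "alp * r1 ^ m \<le> r0 - bet / r1 ^ l" using Phi_le(1) by (simp add: Phi_def)
  then show "ca \<le> cb" unfolding ca_def cb_def by (rule divide_right_mono) simp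
  show "0 \<le> cB" using pos r12 r1 d2 by (simp add: cB_def)
  have "bet / r2 ^ l \<le> r0 - alp * r2 ^ m" using Phi_le(2) by (simp add: Phi_def)
  then show "cB \<le> cA" unfolding cA_def cB_def by (rule divide_right_mono) simp
qed

lemma Pf_deriv: "0 < x \<Longrightarrow> (Pf has_real_derivative Pd x) (at x)"
  unfolding Pf_def[abs_def] Pd_def
  by (rule derivative_eq_intros sq0_deriv'[THEN DERIV_chain2] refl | simp)+

end

lemma sq0_nonneg: "0 \<le> sq0 x" by (simp add: sq0_def)
lemma sq0_zero: "x \<le> 0 \<Longrightarrow> sq0 x = 0" by (simp add: sq0_def max_def)
lemma sq0_pos: "0 \<le> x \<Longrightarrow> sq0 x = x^2" by (simp add: sq0_def max_def)

lemma aux_pow: "0 < (x::real) \<Longrightarrow> 1 \<le> l \<Longrightarrow> b * (real l * x ^ (l - Suc 0)) / (x ^ l * x ^ l) = real l * b / (x * x ^ l)"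
  by (cases l) (auto simp: field_simps)

context constr begin

lemma Qf_deriv: "0 < x \<Longrightarrow> (Qf has_real_derivative Qd x) (at x)"
  unfolding Qf_def[abs_def] Qd_def
  apply (rule derivative_eq_intros sq0_deriv'[THEN DERIV_chain2] refl | simp)+
  using l2 by (simp add: aux_pow)

definition "Phid x = real m * alp * x^(m-1) - real l * bet / x^(l+1)"

lemma Phid_eq: assumes x: "0 < x" shows "Phid x = real m * alp * (x^N - rc^N) / x^(l+1)"
proof -
  have e: "m - 1 + (l + 1) = N" using m2 by (simp add: N_def)
  have p: "x^(m-1) * x^(l+1) = x^N" unfolding e[symmetric] power_add ..
  have lb: "real l * bet = real m * alp * rc^N" using l2 by (simp add: bet_def kap_def)
  have xp: "x^(l+1) > 0" using x by simp
  have a: "real m * alp * x^(m-1) = real m * alp * (x^(m-1) * x^(l+1)) / x^(l+1)" using xp x by simp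
  have "Phid x = real m * alp * x^N / x^(l+1) - real m * alp * rc^N / x^(l+1)"
    unfolding Phid_def by (subst a) (simp only: p lb)
  then show ?thesis by (simp add: diff_divide_distrib right_diff_distrib)
qed

lemma Phid_neg: "0 < x \<Longrightarrow> x < rc \<Longrightarrow> Phid x < 0"
proof -
  assume x: "0 < x" "x < rc"
  have "x^N < rc^N" using x m2 by (intro power_strict_mono) (auto simp: N_def)
  then show ?thesis using x pos m2 by (simp add: Phid_eq divide_neg_pos mult_pos_neg)
qed

lemma Phid_pos: "rc < x \<Longrightarrow> 0 < Phid x"
proof -
  assume x: "rc < x"
  have "rc^N < x^N" using x order m2 by (intro power_strict_mono) (auto simp: N_def)
  then show ?thesis using x pos m2 order by (simp add: Phid_eq)
qed

lemma Phi_deriv: "0 < x \<Longrightarrow> (Phi has_real_derivative Phid x) (at x)"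
  unfolding Phi_def[abs_def] Phid_def
  apply (rule derivative_eq_intros refl | simp)+
  using l2 by (simp add: aux_pow)

lemma Phi_cont: "continuous_on {a..b} Phi" if "0 < a" for a b
  unfolding Phi_def using that by (intro continuous_intros) auto

lemma Phi_dec: "r1 < x \<Longrightarrow> x \<le> rc \<Longrightarrow> Phi x < Phi r1"
  by (rule DERIV_neg_imp_decreasing_open[where f=Phi])
     (use order r1 in \<open>auto intro!: exI Phi_deriv Phid_neg Phi_cont\<close>)

lemma Phi_inc: "rc \<le> x \<Longrightarrow> x < r2 \<Longrightarrow> Phi x < Phi r2"
  by (rule DERIV_pos_imp_increasing_open[where f=Phi])
     (use order r1 in \<open>auto intro!: exI Phi_deriv Phid_pos Phi_cont\<close>)

end

context constr begin

lemma P_le: "x < rb \<Longrightarrow> Pf x \<le> alp * x^m"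
  using coefs sq0_nonneg[of "ra - x"] by (simp add: Pf_def sq0_zero)
lemma Q_ge: "x < rb \<Longrightarrow> bet / x^l \<le> Qf x"
  using coefs sq0_nonneg[of "ra - x"] order by (simp add: Qf_def sq0_zero)
lemma P_ge: "ra < x \<Longrightarrow> alp * x^m \<le> Pf x"
  using coefs sq0_nonneg[of "x - rb"] by (simp add: Pf_def sq0_zero)
lemma Q_le: "ra < x \<Longrightarrow> Qf x \<le> bet / x^l"
  using coefs sq0_nonneg[of "x - rb"] by (simp add: Qf_def sq0_zero)

lemma PdQd: "Pd x + Qd x = Phid x + 2*(ca - cb)*max 0 (ra - x) + 2*(cA - cB)*max 0 (x - rb)"
  by (simp add: Pd_def Qd_def Phid_def algebra_simps)

lemma mPQ: assumes x: "0 < x" shows "real m * (alp * x^m) - real l * (bet / x^l) = x * Phid x"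
proof -
  have a: "x * x^(m-1) = x^m" using m2 by (metis One_nat_def Suc_le_D Suc_le_eq le_trans one_le_numeral power_Suc diff_Suc_1)
  have b: "x * (real l * bet / x^(l+1)) = real l * (bet / x^l)" using x by (simp add: field_simps)
  show ?thesis unfolding Phid_def right_diff_distrib b
    by (simp add: a[symmetric] mult_ac)
qed

lemma Jpos: assumes x: "0 < x" "x \<noteq> rc"
  shows "(real m * Pf x - real l * Qf x) * (Pd x + Qd x) > 0"
proof (cases "x < rc")
  case True
  have xb: "x < rb" using True order by simp
  have "real m * Pf x - real l * Qf x \<le> real m * (alp * x^m) - real l * (bet / x^l)"
    using P_le[OF xb] Q_ge[OF xb] by (intro diff_mono mult_left_mono) auto
  also have "\<dots> < 0" unfolding mPQ[OF x(1)] using Phid_neg[OF x(1) True] x by (simp add: mult_pos_neg)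
  finally have A: "real m * Pf x - real l * Qf x < 0" .
  have "Pd x + Qd x \<le> Phid x"
    unfolding PdQd using xb coefs by (simp add: mult_nonpos_nonneg)
  also have "\<dots> < 0" using Phid_neg[OF x(1) True] .
  finally show ?thesis using A by (simp add: mult_neg_neg)
next
  case False
  then have T: "rc < x" using x by simp
  have xa: "ra < x" using T order by simp
  have "real m * (alp * x^m) - real l * (bet / x^l) \<le> real m * Pf x - real l * Qf x"
    using P_ge[OF xa] Q_le[OF xa] by (intro diff_mono mult_left_mono) auto
  moreover have "0 < real m * (alp * x^m) - real l * (bet / x^l)" unfolding mPQ[OF x(1)] using Phid_pos[OF T] x by simp
  ultimately have A: "0 < real m * Pf x - real l * Qf x" by linarith
  have "Phid x \<le> Pd x + Qd x"
    unfolding PdQd using xa coefs by simp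
  moreover have "0 < Phid x" using Phid_pos[OF T] .
  ultimately show ?thesis using A by simp
qed

lemma Pd_nonneg: "0 < x \<Longrightarrow> 0 \<le> Pd x"
  using coefs pos by (simp add: Pd_def)

lemma Qd_nonpos: "0 < x \<Longrightarrow> Qd x \<le> 0"
proof -
  assume x: "0 < x"
  have "0 \<le> real l * bet / x^(l+1)" using pos x by simp
  moreover have "0 \<le> cb * max 0 (ra - x)" "0 \<le> cB * max 0 (x - rb)" using coefs by auto
  ultimately show ?thesis unfolding Qd_def by linarith
qed

end

context constr begin

lemma d1: "(ra - r1)^2 \<noteq> 0" using order by simp
lemma d2: "(r2 - rb)^2 \<noteq> 0" using order by simp

lemma ca_eq: "ca * (ra - r1)^2 = alp * r1^m" using d1 by (simp add: ca_def)
lemma cb_eq: "cb * (ra - r1)^2 = r0 - bet / r1^l" using d1 by (simp add: cb_def)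
lemma cA_eq: "cA * (r2 - rb)^2 = r0 - alp * r2^m" using d2 by (simp add: cA_def)
lemma cB_eq: "cB * (r2 - rb)^2 = bet / r2^l" using d2 by (simp add: cB_def)

lemma bnd: "Pf r1 = 0" "Qf r1 = r0" "Pf r2 = r0" "Qf r2 = 0"
proof -
  have s1: "sq0 (ra - r1) = (ra - r1)^2" using order by (simp add: sq0_pos)
  have s2: "sq0 (r1 - rb) = 0" using order by (simp add: sq0_zero)
  have s3: "sq0 (ra - r2) = 0" using order by (simp add: sq0_zero)
  have s4: "sq0 (r2 - rb) = (r2 - rb)^2" using order by (simp add: sq0_pos)
  show "Pf r1 = 0" unfolding Pf_def s1 s2 using ca_eq by simp
  show "Qf r1 = r0" unfolding Qf_def s1 s2 using cb_eq by simp
  show "Pf r2 = r0" unfolding Pf_def s3 s4 using cA_eq by simp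
  show "Qf r2 = 0" unfolding Qf_def s3 s4 using cB_eq by simp
qed

lemma P_nonneg: assumes "r1 \<le> x" "x \<le> r2" shows "0 \<le> Pf x"
proof (cases "x \<le> ra")
  case True
  have s1: "sq0 (ra - x) = (ra - x)^2" using True by (simp add: sq0_pos)
  have s2: "sq0 (x - rb) = 0" using True order by (simp add: sq0_zero)
  have "(ra - x)^2 \<le> (ra - r1)^2" using assms True by (intro power_mono) auto
  then have "ca * (ra - x)^2 \<le> alp * r1^m" using coefs ca_eq by (metis mult_left_mono)
  also have "\<dots> \<le> alp * x^m" using assms pos r1 by (intro mult_left_mono power_mono) auto
  finally show ?thesis unfolding Pf_def s1 s2 by simp
next
  case False
  then have "alp * x^m \<le> Pf x" by (intro P_ge) simp
  moreover have "0 \<le> alp * x^m" using pos assms r1 by simp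
  ultimately show ?thesis by linarith
qed

lemma Q_nonneg: assumes "r1 \<le> x" "x \<le> r2" shows "0 \<le> Qf x"
proof (cases "rb \<le> x")
  case True
  have s1: "sq0 (x - rb) = (x - rb)^2" using True by (simp add: sq0_pos)
  have s2: "sq0 (ra - x) = 0" using True order by (simp add: sq0_zero)
  have "(x - rb)^2 \<le> (r2 - rb)^2" using assms True by (intro power_mono) auto
  then have "cB * (x - rb)^2 \<le> bet / r2^l" using coefs cB_eq by (metis mult_left_mono)
  also have "\<dots> \<le> bet / x^l" using assms pos r1 by (intro divide_left_mono power_mono mult_pos_pos) auto
  finally show ?thesis unfolding Qf_def s1 s2 by simp
next
  case False
  then have "bet / x^l \<le> Qf x" by (intro Q_ge) simp
  moreover have "0 \<le> bet / x^l" using pos assms r1 by simp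
  ultimately show ?thesis by linarith
qed

lemma S_eq: "Pf x + Qf x = Phi x + (cb - ca) * sq0 (ra - x) + (cA - cB) * sq0 (x - rb)"
  by (simp add: Pf_def Qf_def Phi_def algebra_simps)

lemma S_bound: assumes "r1 \<le> x" "x \<le> r2"
  shows "Pf x + Qf x \<le> r0" and "r1 < x \<Longrightarrow> x < r2 \<Longrightarrow> Pf x + Qf x < r0"
proof -
  have main: "Pf x + Qf x \<le> r0 \<and> (r1 < x \<longrightarrow> x < r2 \<longrightarrow> Pf x + Qf x < r0)"
  proof (cases "x \<le> rc")
    case True
    have s2: "sq0 (x - rb) = 0" using True order by (simp add: sq0_zero)
    have "sq0 (ra - x) \<le> (ra - r1)^2"
    proof (cases "x \<le> ra")
      case True
      then show ?thesis using assms by (simp add: sq0_pos power_mono)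
    next
      case False
      then show ?thesis by (simp add: sq0_zero)
    qed
    then have "(cb - ca) * sq0 (ra - x) \<le> (cb - ca) * (ra - r1)^2" using coefs by (intro mult_left_mono) auto
    also have "\<dots> = r0 - Phi r1" using cb_eq ca_eq by (simp add: Phi_def algebra_simps)
    finally have A: "(cb - ca) * sq0 (ra - x) \<le> r0 - Phi r1" .
    have B1: "r1 < x \<longrightarrow> Phi x < Phi r1" using Phi_dec[of x] True by blast
    have B: "Phi x \<le> Phi r1"
    proof (cases "x = r1")
      case False
      with assms have "r1 < x" by simp
      with B1 show ?thesis by simp
    qed simp
    show ?thesis unfolding S_eq s2 using A B B1 by auto
  next
    case False
    have s2: "sq0 (ra - x) = 0" using False order by (simp add: sq0_zero)
    have "sq0 (x - rb) \<le> (r2 - rb)^2"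
    proof (cases "rb \<le> x")
      case True
      then show ?thesis using assms by (simp add: sq0_pos power_mono)
    next
      case False
      then show ?thesis by (simp add: sq0_zero)
    qed
    then have "(cA - cB) * sq0 (x - rb) \<le> (cA - cB) * (r2 - rb)^2" using coefs by (intro mult_left_mono) auto
    also have "\<dots> = r0 - Phi r2" using cA_eq cB_eq by (simp add: Phi_def algebra_simps)
    finally have A: "(cA - cB) * sq0 (x - rb) \<le> r0 - Phi r2" .
    have B1: "x < r2 \<longrightarrow> Phi x < Phi r2" using Phi_inc[of x] False by auto
    have B: "Phi x \<le> Phi r2"
    proof (cases "x = r2")
      case False
      with assms have "x < r2" by simp
      with B1 show ?thesis by simp
    qed simp
    show ?thesis unfolding S_eq s2 using A B B1 by auto
  qed
  then show "Pf x + Qf x \<le> r0" and "r1 < x \<Longrightarrow> x < r2 \<Longrightarrow> Pf x + Qf x < r0" by auto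
qed

end

context constr begin

definition "F = Fgen Pf Qf m l"

lemma m1l1: obtains m1 l1 where "m = Suc m1" "l = Suc l1"
proof -
  obtain m1 where "m = Suc m1" using m2 by (cases m) auto
  moreover obtain l1 where "l = Suc l1" using l2 by (cases l) auto
  ultimately show ?thesis using that by blast
qed

lemma F_der: assumes z: "z \<noteq> 0"
  shows "(F has_derivative (\<lambda>h.
      (let \<rho> = cmod z; u = z / of_real \<rho> in
       cnj u / 2 * (u^m * of_real (Pd \<rho> + real m * Pf \<rho> / \<rho>) + cnj u ^ l * of_real (Qd \<rho> - real l * Qf \<rho> / \<rho>))) * h
    + (let \<rho> = cmod z; u = z / of_real \<rho> in
       u / 2 * (u^m * of_real (Pd \<rho> - real m * Pf \<rho> / \<rho>) + cnj u ^ l * of_real (Qd \<rho> + real l * Qf \<rho> / \<rho>))) * cnj h)) (at z)"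
proof -
  obtain m1 l1 where ml: "m = Suc m1" "l = Suc l1" by (rule m1l1)
  have c: "0 < cmod z" using z by simp
  note F_deriv[OF z Pf_deriv[OF c] Qf_deriv[OF c], of m1 l1]
  then show ?thesis unfolding ml[symmetric] F_def[symmetric] Let_def .
qed

lemma F_cont: "continuous_on (-{0}) F"
proof (rule continuous_at_imp_continuous_on, intro ballI)
  fix z :: complex assume "z \<in> -{0}"
  then have "z \<noteq> 0" by simp
  from has_derivative_continuous[OF F_der[OF this]] show "isCont F z" .
qed

lemma F_band: assumes "ra < cmod w" "cmod w < rb"
  shows "F w = of_real alp * w^m + of_real bet / w^l"
proof -
  define \<rho> where "\<rho> = cmod w"
  have w: "w \<noteq> 0" using assms order by auto
  have r: "0 < \<rho>" using w by (simp add: \<rho>_def)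
  have s1: "sq0 (ra - \<rho>) = 0" "sq0 (\<rho> - rb) = 0" using assms by (auto simp: \<rho>_def sq0_zero)
  have P: "Pf \<rho> = alp * \<rho>^m" and Q: "Qf \<rho> = bet / \<rho>^l" using s1 by (simp_all add: Pf_def Qf_def)
  define R where "R = complex_of_real \<rho>"
  have R: "R \<noteq> 0" using r by (simp add: R_def)
  have cwR: "cnj (w / R) = R / w"
  proof -
    have "w * cnj w = R * R" using complex_norm_square[of w] by (simp add: R_def \<rho>_def power2_eq_square)
    moreover have "cnj R = R" by (simp add: R_def)
    ultimately show ?thesis using w R by (simp add: field_simps)
  qed
  have e1: "complex_of_real (alp * \<rho>^m) * (w / R)^m = of_real alp * w^m"
    using R by (simp add: R_def power_divide)
  have e2: "complex_of_real (bet / \<rho>^l) * (R / w)^l = of_real bet / w^l"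
    using R by (simp add: R_def power_divide)
  show ?thesis
    unfolding F_def Fgen_def \<rho>_def[symmetric] P Q R_def[symmetric] cwR e1 e2 ..
qed

end

lemma cnj_unit: assumes "w \<noteq> 0" shows "cnj (w / complex_of_real (cmod w)) = complex_of_real (cmod w) / w"
proof -
  have R: "complex_of_real (cmod w) \<noteq> 0" using assms by simp
  have "w * cnj w = complex_of_real (cmod w) * complex_of_real (cmod w)"
    using complex_norm_square[of w] by (simp add: power2_eq_square)
  then show ?thesis using assms R by (simp add: field_simps)
qed

lemma unit_norm: assumes "w \<noteq> 0" shows "cmod (w / complex_of_real (cmod w)) = 1"
  using assms by (simp add: norm_divide)

lemma open_ann: "open {z::complex. a < cmod z \<and> cmod z < b}"
proof -
  have "{z::complex. a < cmod z \<and> cmod z < b} = {z. a < cmod z} \<inter> {z. cmod z < b}" by auto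
  moreover have "open {z::complex. a < cmod z}" by (rule open_Collect_less) (intro continuous_intros)+
  moreover have "open {z::complex. cmod z < b}" by (rule open_Collect_less) (intro continuous_intros)+
  ultimately show ?thesis by auto
qed

context constr begin

lemma F_norm: assumes "r1 \<le> cmod z" "cmod z \<le> r2" shows "cmod (F z) \<le> Pf (cmod z) + Qf (cmod z)"
proof -
  have z: "z \<noteq> 0" using assms r1 by auto
  have n: "cmod (z / complex_of_real (cmod z)) = 1" by (rule unit_norm[OF z])
  have "cmod (F z) \<le> cmod (complex_of_real (Pf (cmod z)) * (z / complex_of_real (cmod z)) ^ m)
      + cmod (complex_of_real (Qf (cmod z)) * cnj (z / complex_of_real (cmod z)) ^ l)"
    unfolding F_def Fgen_def by (rule norm_triangle_ineq)
  also have "\<dots> = Pf (cmod z) + Qf (cmod z)"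
    using P_nonneg[OF assms] Q_nonneg[OF assms] n z by (simp add: norm_mult norm_power norm_divide)
  finally show ?thesis .
qed

lemma F_r1: assumes "cmod z = r1" shows "F z = of_real r0 * of_real r1 ^ l / z ^ l"
proof -
  have z: "z \<noteq> 0" using assms r1 by auto
  show ?thesis unfolding F_def Fgen_def assms bnd cnj_unit[OF z, unfolded assms]
    by (simp add: power_divide)
qed

lemma F_r2: assumes "cmod z = r2" shows "F z = of_real r0 * z ^ m / of_real r2 ^ m"
  unfolding F_def Fgen_def assms bnd by (simp add: power_divide)

lemma F_sym: "F (cis (2 * pi / real (l + m)) * z) = cis (2 * real m * pi / real (l + m)) * F z"
proof -
  define \<omega> where "\<omega> = cis (2 * pi / real (l + m))"
  define c where "c = cis (2 * real m * pi / real (l + m))"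
  have Nz: "real (l + m) \<noteq> 0" using l2 by simp
  have om: "\<omega> ^ m = c" unfolding \<omega>_def c_def Complex.DeMoivre by (simp add: field_simps)
  have ol: "cnj \<omega> ^ l = c"
  proof -
    have "cnj \<omega> ^ l = cis (- (real l * (2 * pi / real (l + m))))" unfolding \<omega>_def cis_cnj Complex.DeMoivre by simp
    also have "\<dots> = cis (- (real l * (2 * pi / real (l + m)))) * cis (2 * pi)" by simp
    also have "\<dots> = c" unfolding cis_mult c_def
      by (rule arg_cong[where f=cis]) (use Nz in \<open>simp add: field_simps\<close>)
    finally show ?thesis .
  qed
  have nw: "cmod (\<omega> * z) = cmod z" by (simp add: \<omega>_def norm_mult)
  have "F (\<omega> * z) = of_real (Pf (cmod z)) * (\<omega> ^ m * (z / of_real (cmod z)) ^ m)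
     + of_real (Qf (cmod z)) * (cnj \<omega> ^ l * cnj (z / of_real (cmod z)) ^ l)"
    unfolding F_def Fgen_def nw by (simp add: power_mult_distrib[symmetric])
  also have "\<dots> = c * F z" unfolding om ol F_def Fgen_def by (simp add: algebra_simps)
  finally show ?thesis by (simp add: \<omega>_def c_def)
qed

end

context constr begin
lemma cPd: "0 \<notin> S \<Longrightarrow> continuous_on S (\<lambda>z. Pd (cmod z))"
  unfolding Pd_def by (intro continuous_intros)
lemma cQd: "0 \<notin> S \<Longrightarrow> continuous_on S (\<lambda>z. Qd (cmod z))"
  unfolding Qd_def sq0_def by (intro continuous_intros; auto)
lemma cPf: "0 \<notin> S \<Longrightarrow> continuous_on S (\<lambda>z. Pf (cmod z))"
  unfolding Pf_def sq0_def by (intro continuous_intros; auto)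
lemma cQf: "0 \<notin> S \<Longrightarrow> continuous_on S (\<lambda>z. Qf (cmod z))"
  unfolding Qf_def sq0_def by (intro continuous_intros; auto)
lemma cA: "0 \<notin> S \<Longrightarrow> continuous_on S (\<lambda>z. let \<rho> = cmod z; u = z / complex_of_real \<rho> in
       cnj u / 2 * (u^m * of_real (Pd \<rho> + real m * Pf \<rho> / \<rho>) + cnj u ^ l * of_real (Qd \<rho> - real l * Qf \<rho> / \<rho>)))"
  unfolding Let_def by (intro continuous_intros cPd cQd cPf cQf; auto)
lemma cB: "0 \<notin> S \<Longrightarrow> continuous_on S (\<lambda>z. let \<rho> = cmod z; u = z / complex_of_real \<rho> in
       u / 2 * (u^m * of_real (Pd \<rho> - real m * Pf \<rho> / \<rho>) + cnj u ^ l * of_real (Qd \<rho> + real l * Qf \<rho> / \<rho>)))"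
  unfolding Let_def by (intro continuous_intros cPd cQd cPf cQf; auto)
end

context constr begin

lemma qr: "quasiregular_on F {z. r1 < cmod z \<and> cmod z < r2}"
  unfolding quasiregular_on_def
proof (intro conjI ballI)
  let ?U = "{z. r1 < cmod z \<and> cmod z < r2}"
  show "open ?U" by (rule open_ann)
  show "continuous_on ?U F" by (rule continuous_on_subset[OF F_cont]) (use r1 in auto)
  fix z0 assume z0: "z0 \<in> ?U"
  show "\<exists>V W \<phi> g \<psi>. z0 \<in> V \<and> V \<subseteq> ?U \<and> quasiconformal_on \<phi> V \<and> g holomorphic_on \<phi> ` V \<and>
             open W \<and> g ` \<phi> ` V \<subseteq> W \<and> quasiconformal_on \<psi> W \<and> (\<forall>x\<in>V. F x = \<psi> (g (\<phi> x)))"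
  proof (cases "cmod z0 = rc")
    case True
    let ?V = "{z. ra < cmod z \<and> cmod z < rb}"
    have z0V: "z0 \<in> ?V" using True order by auto
    have VU: "?V \<subseteq> ?U" using order by auto
    have nz: "0 \<notin> ?V" using order by auto
    have qV: "quasiconformal_on (\<lambda>x. x) ?V" by (rule qc_id[OF open_ann])
    have qW: "quasiconformal_on (\<lambda>x. x) UNIV" by (rule qc_id) simp
    have hol: "(\<lambda>w. of_real alp * w^m + of_real bet / w^l) holomorphic_on (\<lambda>x. x) ` ?V"
      using nz by (auto intro!: holomorphic_intros)
    show ?thesis
      by (rule exI[of _ ?V], rule exI[of _ UNIV], rule exI[of _ "\<lambda>x. x"],
          rule exI[of _ "\<lambda>w. of_real alp * w^m + of_real bet / w^l"], rule exI[of _ "\<lambda>x. x"])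
         (use z0V VU qV qW hol F_band in auto)
  next
    case False
    let ?U' = "{z. r1 < cmod z \<and> cmod z < r2} \<inter> {z. cmod z \<noteq> rc}"
    have oU': "open ?U'" by (intro open_Int open_ann open_Collect_neq) (intro continuous_intros)+
    have z0U': "z0 \<in> ?U'" using z0 False by auto
    define A where "A = (\<lambda>z. let \<rho> = cmod z; u = z / complex_of_real \<rho> in
       cnj u / 2 * (u^m * of_real (Pd \<rho> + real m * Pf \<rho> / \<rho>) + cnj u ^ l * of_real (Qd \<rho> - real l * Qf \<rho> / \<rho>)))"
    define B where "B = (\<lambda>z. let \<rho> = cmod z; u = z / complex_of_real \<rho> in
       u / 2 * (u^m * of_real (Pd \<rho> - real m * Pf \<rho> / \<rho>) + cnj u ^ l * of_real (Qd \<rho> + real l * Qf \<rho> / \<rho>)))"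
    have der: "(F has_derivative (\<lambda>h. A w * h + B w * cnj h)) (at w)" if "w \<in> ?U'" for w
    proof -
      have "w \<noteq> 0" using that r1 by auto
      from F_der[OF this] show ?thesis by (simp add: A_def B_def)
    qed
    have nz: "0 \<notin> ?U'" using r1 by auto
    have cA: "continuous_on ?U' A" unfolding A_def by (rule cA[OF nz])
    have cB: "continuous_on ?U' B" unfolding B_def by (rule cB[OF nz])
    have lt: "cmod (B z0) < cmod (A z0)"
    proof -
      have z0n: "z0 \<noteq> 0" using z0 r1 by auto
      have r: "0 < cmod z0" using z0n by simp
      have b1: "r1 \<le> cmod z0" "cmod z0 \<le> r2" using z0 by auto
      show ?thesis unfolding A_def B_def Let_def
        by (rule J_ineq[OF r unit_norm[OF z0n] P_nonneg[OF b1] Q_nonneg[OF b1] Pd_nonneg[OF r] Qd_nonpos[OF r] Jpos[OF r False]])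
    qed
    obtain V where V: "open V" "z0 \<in> V" "V \<subseteq> ?U'" "quasiconformal_on F V"
      using qc_local[OF oU' z0U' der cA cB lt] by blast
    have qW: "quasiconformal_on (\<lambda>x. x) UNIV" by (rule qc_id) simp
    show ?thesis
      by (rule exI[of _ V], rule exI[of _ UNIV], rule exI[of _ F],
          rule exI[of _ "\<lambda>x. x"], rule exI[of _ "\<lambda>x. x"])
         (use V qW in auto)
  qed
qed

end

theorem lemma2p2:
  fixes l m :: nat and r0 r1 r2 :: real
  assumes "l \<ge> 2" and "m \<ge> 2" and "1 / real l + 1 / real m < 1"
    and "0 < r0" and "r0 < 1"
    and "r1 = r0 + (1 - r0) / real l" and "r2 = 1 - (1 - r0) / real m"
  shows "\<exists>F :: complex \<Rightarrow> complex.
     continuous_on {z. r1 \<le> cmod z \<and> cmod z \<le> r2} F \<and>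
     F ` {z. r1 \<le> cmod z \<and> cmod z \<le> r2} \<subseteq> cball 0 r0 \<and>
     (\<forall>z. cmod z = r1 \<longrightarrow> F z = of_real r0 * of_real r1 ^ l / z ^ l) \<and>
     (\<forall>z. cmod z = r2 \<longrightarrow> F z = of_real r0 * z ^ m / of_real r2 ^ m) \<and>
     F ` {z. r1 < cmod z \<and> cmod z < r2} \<subseteq> ball 0 r0 \<and>
     quasiregular_on F {z. r1 < cmod z \<and> cmod z < r2} \<and>
     (\<forall>z\<in>{z. r1 \<le> cmod z \<and> cmod z \<le> r2}.
        F (cis (2 * pi / real (l + m)) * z) = cis (2 * real m * pi / real (l + m)) * F z)"
proof -
  have lpos: "real l > 0" and mpos: "real m > 0" using assms(1,2) by auto
  have r1pos: "0 < r1"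
  proof -
    have "0 \<le> (1 - r0) / real l" using assms(5) lpos by simp
    then show ?thesis using assms(4,6) by linarith
  qed
  have r12: "r1 < r2"
  proof -
    have "r2 - r1 = (1 - r0) * (1 - (1 / real l + 1 / real m))"
      unfolding assms(6,7) using lpos mpos by (simp add: field_simps)
    moreover have "0 < (1 - r0) * (1 - (1 / real l + 1 / real m))"
      using assms(3,5) by simp
    ultimately show ?thesis by simp
  qed
  interpret c: constr l m r0 r1 r2
    by unfold_locales (use assms r1pos r12 in auto)
  show ?thesis
  proof (intro exI[of _ c.F] conjI ballI allI impI subsetI)
    show "continuous_on {z. r1 \<le> cmod z \<and> cmod z \<le> r2} c.F"
      by (rule continuous_on_subset[OF c.F_cont]) (use r1pos in auto)
    show "quasiregular_on c.F {z. r1 < cmod z \<and> cmod z < r2}" by (rule c.qr)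
    fix z
    show "cmod z = r1 \<Longrightarrow> c.F z = of_real r0 * of_real r1 ^ l / z ^ l" by (rule c.F_r1)
    show "cmod z = r2 \<Longrightarrow> c.F z = of_real r0 * z ^ m / of_real r2 ^ m" by (rule c.F_r2)
    show "c.F (cis (2 * pi / real (l + m)) * z) = cis (2 * real m * pi / real (l + m)) * c.F z"
      by (rule c.F_sym)
  next
    fix y assume "y \<in> c.F ` {z. r1 \<le> cmod z \<and> cmod z \<le> r2}"
    then obtain z where z: "r1 \<le> cmod z" "cmod z \<le> r2" "y = c.F z" by auto
    have "cmod (c.F z) \<le> r0" using c.F_norm[OF z(1,2)] c.S_bound(1)[OF z(1,2)] by linarith
    then have "cmod y \<le> r0" using z(3) by simp
    then show "y \<in> cball 0 r0" by (simp add: dist_norm)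
  next
    fix y assume "y \<in> c.F ` {z. r1 < cmod z \<and> cmod z < r2}"
    then obtain z where z: "r1 < cmod z" "cmod z < r2" "y = c.F z" by auto
    have b: "r1 \<le> cmod z" "cmod z \<le> r2" using z by auto
    have "cmod (c.F z) < r0" using c.F_norm[OF b] c.S_bound(2)[OF b z(1,2)] by linarith
    then have "cmod y < r0" using z(3) by simp
    then show "y \<in> ball 0 r0" by (simp add: dist_norm)
  qed
qed

end
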